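(* Let $N,T,U$ be integers with $0\le T<U\le N$, let $\mathbb{F}_q$ be a finite field, let $d$ be divisible by $U-T$, and let $W\in\mathbb{F}_q^{U\times N}$ be a $T$-private MDS matrix with columns $W_1,\dots,W_N$. For each $i\in[N]$, let $\mathbf{z}_i$ be uniformly random in $\mathbb{F}_q^d$, partitioned into $[\mathbf{z}_i]_1,\dots,[\mathbf{z}_i]_{U-T}\in\mathbb{F}_q^{d/(U-T)}$, let $[\mathbf{n}_i]_{U-T+1},\dots,[\mathbf{n}_i]_U\in\mathbb{F}_q^{d/(U-T)}$ be random, and set $[\tilde{\mathbf{z}}_i]_j=([\mathbf{z}_i]_1,\dots,[\mathbf{z}_i]_{U-T},[\mathbf{n}_i]_{U-T+1},\dots,[\mathbf{n}_i]_U)\cdot W_j$ for $j\in[N]$, where all $\mathbf{z}_i$'s and $[\mathbf{n}_i]_k$'s are mutually independent across users. Then for any $\mathcal{T}\subseteq[N]$ of size $T$ and any $\mathcal{U}_1\subseteq[N]$ with $|\mathcal{U}_1|\ge U$, if the random masks $[\mathbf{n}_i]_k$'s are jointly uniformly random, we have $$I\big(\{\mathbf{z}_i\}_{i\in[N]\setminus\mathcal{T}};\ \{\mathbf{z}_i\}_{i\in\mathcal{T}},\{[\tilde{\mathbf{z}}_j]_i\}_{j\in[N],\,i\in\mathcal{T}}\big)=0.$$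
   Context: A matrix $W\in\mathbb{F}_q^{U\times N}$ is MDS if every $U\times U$ submatrix of $W$ is invertible; it is $T$-private MDS if, in addition, the $T\times N$ submatrix formed by its rows $U-T+1,\dots,U$ is MDS (every $T\times T$ submatrix of it is invertible). The product of the row of vectors with the column $W_j$ means the linear combination $\sum_{k=1}^U W_{k,j}\,v_k$ of the $U$ vectors $v_k\in\mathbb{F}_q^{d/(U-T)}$. $I(\cdot;\cdot)$ denotes mutual information. *)

theory Defs
  imports "HOL-Probability.Probability" "Jordan_Normal_Form.DL_Submatrix"
begin

definition MDS :: "'a::field mat \<Rightarrow> bool" where
  "MDS W \<longleftrightarrow> (\<forall>S. S \<subseteq> {0..<dim_col W} \<longrightarrow> card S = dim_row W \<longrightarrow>
      invertible_mat (submatrix W UNIV S))"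

(* T-private MDS: W is MDS and the submatrix of its last T rows is MDS.
   Rows are 0-indexed, so rows U-T+1..U (1-indexed) are {U-T..<U}. *)
definition private_MDS :: "nat \<Rightarrow> 'a::field mat \<Rightarrow> bool" where
  "private_MDS T W \<longleftrightarrow> MDS W \<and>
     MDS (submatrix W {dim_row W - T..<dim_row W} UNIV)"

(* Sample space: z i c  (user i < N, coordinate c < d) and
   n i k c  (user i < N, mask block k in {U-T..<U}, coordinate c < d div (U-T)). *)
definition sample_space ::
  "nat \<Rightarrow> nat \<Rightarrow> nat \<Rightarrow> nat \<Rightarrow>
   ((nat \<Rightarrow> nat \<Rightarrow> 'a) \<times> (nat \<Rightarrow> nat \<Rightarrow> nat \<Rightarrow> 'a)) set" where
  "sample_space N T U d =
     {(z, n). z \<in> {0..<N} \<rightarrow>\<^sub>E ({0..<d} \<rightarrow>\<^sub>E UNIV) \<and>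
              n \<in> {0..<N} \<rightarrow>\<^sub>E ({U-T..<U} \<rightarrow>\<^sub>E ({0..<d div (U-T)} \<rightarrow>\<^sub>E UNIV))}"

(* block k (0-indexed, k < U) of the vector ([z_i]_1,...,[z_i]_{U-T},[n_i]_{U-T+1},...,[n_i]_U) *)
definition block ::
  "nat \<Rightarrow> nat \<Rightarrow> nat \<Rightarrow> (nat \<Rightarrow> nat \<Rightarrow> 'a) \<Rightarrow> (nat \<Rightarrow> nat \<Rightarrow> nat \<Rightarrow> 'a) \<Rightarrow>
   nat \<Rightarrow> nat \<Rightarrow> nat \<Rightarrow> 'a" where
  "block T U d z n i k c =
     (if k < U - T then z i (k * (d div (U-T)) + c) else n i k c)"

definition enc ::
  "nat \<Rightarrow> nat \<Rightarrow> nat \<Rightarrow> 'a::field mat \<Rightarrow> (nat \<Rightarrow> nat \<Rightarrow> 'a) \<Rightarrow>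
   (nat \<Rightarrow> nat \<Rightarrow> nat \<Rightarrow> 'a) \<Rightarrow> nat \<Rightarrow> nat \<Rightarrow> nat \<Rightarrow> 'a" where
  "enc T U d W z n i j =
     restrict (\<lambda>c. \<Sum>k<U. W $$ (k, j) * block T U d z n i k c) {0..<d div (U-T)}"

end

theory Submission
  imports Defs
begin

lemma indep_count:
  fixes X :: "'w \<Rightarrow> 'x" and Y :: "'w \<Rightarrow> 'y"
  assumes fin: "finite Om"
    and sym: "\<And>x x' B. x \<in> X ` Om \<Longrightarrow> x' \<in> X ` Om \<Longrightarrow>
       card {w\<in>Om. X w = x \<and> Y w \<in> B} \<le> card {w\<in>Om. X w = x' \<and> Y w \<in> B}"
  shows "card {w\<in>Om. X w \<in> A \<and> Y w \<in> B} * card Om = card {w\<in>Om. X w \<in> A} * card {w\<in>Om. Y w \<in> B}"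
proof (cases "Om = {}")
  case True then show ?thesis by simp
next
  case False
  then obtain x0 where x0: "x0 \<in> X ` Om" by blast
  define g where "g B = card {w\<in>Om. X w = x0 \<and> Y w \<in> B}" for B
  have gx: "card {w\<in>Om. X w = x \<and> Y w \<in> B} = g B" if "x \<in> X ` Om" for x B
    using sym[OF that x0] sym[OF x0 that] unfolding g_def by (rule antisym)
  have key: "card {w\<in>Om. X w \<in> A \<and> Y w \<in> B} = card (A \<inter> X ` Om) * g B" for A B
  proof -
    have "{w\<in>Om. X w \<in> A \<and> Y w \<in> B} = (\<Union>x\<in>A \<inter> X ` Om. {w\<in>Om. X w = x \<and> Y w \<in> B})" by auto
    then have "card {w\<in>Om. X w \<in> A \<and> Y w \<in> B} = (\<Sum>x\<in>A \<inter> X ` Om. card {w\<in>Om. X w = x \<and> Y w \<in> B})"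
      by (simp, intro card_UN_disjoint) (auto simp: fin)
    also have "\<dots> = (\<Sum>x\<in>A \<inter> X ` Om. g B)" using gx by (intro sum.cong) auto
    finally show ?thesis by simp
  qed
  have "card Om = card {w\<in>Om. X w \<in> UNIV \<and> Y w \<in> UNIV}" by simp
  then show ?thesis using key[of A B] key[of A UNIV] key[of UNIV B] key[of UNIV UNIV] by simp
qed

lemma PiE2_ext:
  assumes "z \<in> A \<rightarrow>\<^sub>E (B \<rightarrow>\<^sub>E (UNIV::'a set))" "z' \<in> A \<rightarrow>\<^sub>E (B \<rightarrow>\<^sub>E UNIV)"
    "\<And>i c. i \<in> A \<Longrightarrow> c \<in> B \<Longrightarrow> z i c = z' i c"
  shows "z = z'"
proof (rule PiE_ext[OF assms(1,2)])
  fix i assume i: "i \<in> A"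
  show "z i = z' i" using PiE_mem[OF assms(1) i] PiE_mem[OF assms(2) i] assms(3)[OF i]
    by (intro PiE_ext) auto
qed

lemma PiE3_ext:
  assumes "z \<in> A \<rightarrow>\<^sub>E (B \<rightarrow>\<^sub>E (C \<rightarrow>\<^sub>E (UNIV::'a set)))" "z' \<in> A \<rightarrow>\<^sub>E (B \<rightarrow>\<^sub>E (C \<rightarrow>\<^sub>E UNIV))"
    "\<And>i k c. i \<in> A \<Longrightarrow> k \<in> B \<Longrightarrow> c \<in> C \<Longrightarrow> z i k c = z' i k c"
  shows "z = z'"
proof (rule PiE_ext[OF assms(1,2)])
  fix i assume i: "i \<in> A"
  show "z i = z' i" using PiE_mem[OF assms(1) i] PiE_mem[OF assms(2) i] assms(3)[OF i]
    by (intro PiE2_ext) auto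
qed

lemma blk_bound:
  fixes k c D d :: nat
  assumes "k < m" "c < D" "d = m * D"
  shows "k * D + c < d"
proof -
  have "k * D + c < k * D + D" using assms by simp
  also have "\<dots> = Suc k * D" by simp
  also have "\<dots> \<le> m * D" using assms(1) by (intro mult_le_mono1) simp
  finally show ?thesis using assms(3) by simp
qed

lemma pick_interval:
  assumes "a < n"
  shows "pick {m..<m+n} a = m + a"
proof -
  have c: "a < card {m..<m+n}" using assms by simp
  have p: "pick {m..<m+n} a \<in> {m..<m+n}" using pick_in_set_le[OF c] .
  have "card {x\<in>{m..<m+n}. x < pick {m..<m+n} a} = a" using card_pick_le[OF c] .
  moreover have "{x\<in>{m..<m+n}. x < pick {m..<m+n} a} = {m..<pick {m..<m+n} a}" using p by auto
  ultimately have "pick {m..<m+n} a - m = a" using p by simp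
  moreover have "m \<le> pick {m..<m+n} a" using p by simp
  ultimately show ?thesis by linarith
qed

lemma solve_priv:
  fixes W :: "'a::field mat"
  assumes "T < U" "dim_row W = U" "dim_col W = N" "private_MDS T W" "Tset \<subseteq> {0..<N}" "card Tset = T"
  shows "\<exists>v. \<forall>i\<in>Tset. (\<Sum>k\<in>{U-T..<U}. W $$ (k,i) * v k) = t i"
proof -
  define W' where "W' = submatrix W {U-T..<U} UNIV"
  define M where "M = submatrix W' UNIV Tset"
  have e1: "{i. i < U \<and> i \<in> {U-T..<U}} = {U-T..<U}" by auto
  have dW': "dim_row W' = T" "dim_col W' = N"
    unfolding W'_def dim_submatrix using assms(1-3) e1 by auto
  have fT: "finite Tset" using assms(5) finite_subset by blast
  have e2: "{j. j < N \<and> j \<in> Tset} = Tset" using assms(5) by auto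
  have dM: "dim_row M = T" "dim_col M = T"
    unfolding M_def dim_submatrix dW' using e2 assms(6) by auto
  have "MDS W'" using assms(4) assms(2) unfolding private_MDS_def W'_def by simp
  then have inv: "invertible_mat M"
    unfolding MDS_def M_def using assms(5,6) dW' by auto
  have Mij: "M $$ (a,b) = W $$ (U-T+a, pick Tset b)" if "a < T" "b < T" for a b
  proof -
    have "M $$ (a,b) = W' $$ (pick UNIV a, pick Tset b)"
      unfolding M_def using that dW' e2 assms(6) by (subst submatrix_index) auto
    also have "\<dots> = W' $$ (a, pick Tset b)" by (simp add: pick_UNIV)
    also have "\<dots> = W $$ (pick {U-T..<U} a, pick UNIV (pick Tset b))"
    proof -
      have "pick Tset b < N" using pick_in_set_le[of b Tset] that assms(5,6) by auto
      then show ?thesis unfolding W'_def using that assms(1,2,3) e1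
        by (subst submatrix_index) auto
    qed
    also have "\<dots> = W $$ (U-T+a, pick Tset b)"
      using pick_interval[of a T "U-T"] that assms(1) by (simp add: pick_UNIV)
    finally show ?thesis .
  qed
  from inv obtain B where B: "M * B = 1\<^sub>m T" "B * M = 1\<^sub>m (dim_row B)"
    unfolding invertible_mat_def inverts_mat_def using dM by auto
  have dB: "dim_col B = T" using arg_cong[OF B(1), of dim_col] by simp
  have dB2: "dim_row B = T" using arg_cong[OF B(2), of dim_col] dM by simp
  have BM: "B * M = 1\<^sub>m T" using B(2) dB2 by simp
  define t' where "t' = vec T (\<lambda>b. t (pick Tset b))"
  define v' where "v' = transpose_mat B *\<^sub>v t'"
  have Mc: "M \<in> carrier_mat T T" using dM by auto
  have Bc: "B \<in> carrier_mat T T" using dB dB2 by auto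
  have tc: "t' \<in> carrier_vec T" unfolding t'_def by simp
  have "transpose_mat M *\<^sub>v v' = (transpose_mat M * transpose_mat B) *\<^sub>v t'"
    unfolding v'_def using Mc Bc tc by (subst assoc_mult_mat_vec) auto
  also have "transpose_mat M * transpose_mat B = transpose_mat (B * M)"
    using transpose_mult[OF Bc Mc] by simp
  also have "\<dots> = 1\<^sub>m T" using BM by simp
  finally have sol: "transpose_mat M *\<^sub>v v' = t'" using tc by simp
  have dv': "dim_vec v' = T" unfolding v'_def using dB by simp
  show ?thesis
  proof (intro exI ballI)
    fix i assume i: "i \<in> Tset"
    define b where "b = card {a\<in>Tset. a < i}"
    have "{a\<in>Tset. a < i} \<subset> Tset" using i by auto
    then have bT: "b < T" unfolding b_def using psubset_card_mono[OF fT] assms(6) by auto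
    have pb: "pick Tset b = i" unfolding b_def using pick_card_in_set[OF i] .
    have "(\<Sum>k\<in>{U-T..<U}. W $$ (k,i) * v' $ (k - (U-T))) = (\<Sum>a<T. W $$ (U-T+a,i) * v' $ a)"
    proof -
      have "{U-T..<U} = {0+(U-T)..<T+(U-T)}" using assms(1) by simp
      then show ?thesis by (simp only: sum.atLeastLessThan_shift_bounds) (simp add: lessThan_atLeast0 add.commute)
    qed
    also have "\<dots> = (\<Sum>a<T. M $$ (a,b) * v' $ a)" using Mij bT pb by (intro sum.cong) auto
    also have "\<dots> = (transpose_mat M *\<^sub>v v') $ b"
      using bT dM dv' by (simp add: scalar_prod_def lessThan_atLeast0)
    also have "\<dots> = t i" using sol bT pb unfolding t'_def by simp
    finally show "(\<Sum>k\<in>{U-T..<U}. W $$ (k,i) * v' $ (k - (U-T))) = t i" .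
  qed
qed


theorem lemma1:
  fixes N T U d :: nat and W :: "'a::{finite,field} mat"
    and Tset U1 :: "nat set"
  assumes "T < U" and "U \<le> N"
    and "(U - T) dvd d"
    and "dim_row W = U" and "dim_col W = N"
    and "private_MDS T W"
    and "Tset \<subseteq> {0..<N}" and "card Tset = T"
    and "U1 \<subseteq> {0..<N}" and "card U1 \<ge> U"
  shows "prob_space.mutual_information
           (measure_pmf (pmf_of_set (sample_space N T U d :: ((nat \<Rightarrow> nat \<Rightarrow> 'a) \<times> _) set)))
           2 (count_space UNIV) (count_space UNIV)
           (\<lambda>(z, n). restrict z ({0..<N} - Tset))
           (\<lambda>(z, n). (restrict z Tset,
                       restrict (\<lambda>(j, i). enc T U d W z n j i) ({0..<N} \<times> Tset)))
         = 0"
proof -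
  define D where "D = d div (U-T)"
  have dD: "d = (U-T) * D" unfolding D_def using assms(3) by simp
  define Om where "Om = (sample_space N T U d :: ((nat \<Rightarrow> nat \<Rightarrow> 'a) \<times> _) set)"
  define X where "X = (\<lambda>(z::nat \<Rightarrow> nat \<Rightarrow> 'a, n::nat \<Rightarrow> nat \<Rightarrow> nat \<Rightarrow> 'a). restrict z ({0..<N} - Tset))"
  define Y where "Y = (\<lambda>(z::nat \<Rightarrow> nat \<Rightarrow> 'a, n::nat \<Rightarrow> nat \<Rightarrow> nat \<Rightarrow> 'a). (restrict z Tset,
                       restrict (\<lambda>(j, i). enc T U d W z n j i) ({0..<N} \<times> Tset)))"
  have OmE: "Om = ({0..<N} \<rightarrow>\<^sub>E ({0..<d} \<rightarrow>\<^sub>E UNIV)) \<times>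
      ({0..<N} \<rightarrow>\<^sub>E ({U-T..<U} \<rightarrow>\<^sub>E ({0..<D} \<rightarrow>\<^sub>E UNIV)))"
    unfolding Om_def sample_space_def D_def by auto
  have fin: "finite Om" unfolding OmE by (intro finite_cartesian_product finite_PiE) auto
  have ne: "Om \<noteq> {}" unfolding OmE by (simp add: PiE_eq_empty_iff)
  have "\<forall>t. \<exists>v. \<forall>i\<in>Tset. (\<Sum>k\<in>{U-T..<U}. W $$ (k,i) * v k) = t i"
    using solve_priv[OF assms(1,4,5,6,7,8)] by blast
  then obtain sol where sol: "\<And>t i. i \<in> Tset \<Longrightarrow> (\<Sum>k\<in>{U-T..<U}. W $$ (k,i) * sol t k) = t i"
    using choice[of "\<lambda>t v. \<forall>i\<in>Tset. (\<Sum>k\<in>{U-T..<U}. W $$ (k,i) * v k) = t i"] by blast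
  have sym: "card {w\<in>Om. X w = x \<and> Y w \<in> B} \<le> card {w\<in>Om. X w = x' \<and> Y w \<in> B}"
    if xin: "x \<in> X ` Om" and x'in: "x' \<in> X ` Om" for x x' B
  proof -
    obtain z0 n0 where w0: "(z0, n0) \<in> Om" "X (z0, n0) = x"
    proof -
      from xin obtain w where "w \<in> Om" "x = X w" by blast
      then show ?thesis using that by (cases w) auto
    qed
    obtain z1 n1 where w1: "(z1, n1) \<in> Om" "X (z1, n1) = x'"
    proof -
      from x'in obtain w where "w \<in> Om" "x' = X w" by blast
      then show ?thesis using that by (cases w) auto
    qed
    define Dl where "Dl i c = (if i \<in> Tset then 0 else z1 i c - z0 i c)" for i c
    define L where "L j k c = sol (\<lambda>i. - (\<Sum>k'<U-T. W $$ (k',i) * Dl j (k'*D+c))) k" for j k c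
    define psi where "psi = (\<lambda>(z::nat\<Rightarrow>nat\<Rightarrow>'a, n::nat\<Rightarrow>nat\<Rightarrow>nat\<Rightarrow>'a).
       ((\<lambda>i\<in>{0..<N}. \<lambda>c\<in>{0..<d}. z i c + Dl i c),
        (\<lambda>i\<in>{0..<N}. \<lambda>k\<in>{U-T..<U}. \<lambda>c\<in>{0..<D}. n i k c + L i k c)))"
    have psiOm: "psi w \<in> Om" for w unfolding psi_def OmE by (auto split: prod.splits)
    have inj: "inj_on psi Om"
    proof (rule inj_onI)
      fix w w' assume ww: "w \<in> Om" "w' \<in> Om" "psi w = psi w'"
      obtain z n z' n' where wz: "w = (z, n)" "w' = (z', n')" by (cases w, cases w')
      have m: "z \<in> {0..<N} \<rightarrow>\<^sub>E ({0..<d} \<rightarrow>\<^sub>E UNIV)" "z' \<in> {0..<N} \<rightarrow>\<^sub>E ({0..<d} \<rightarrow>\<^sub>E UNIV)"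
        "n \<in> {0..<N} \<rightarrow>\<^sub>E ({U-T..<U} \<rightarrow>\<^sub>E ({0..<D} \<rightarrow>\<^sub>E UNIV))"
        "n' \<in> {0..<N} \<rightarrow>\<^sub>E ({U-T..<U} \<rightarrow>\<^sub>E ({0..<D} \<rightarrow>\<^sub>E UNIV))"
        using ww(1,2) unfolding wz OmE by auto
      have "z = z'"
      proof (rule PiE2_ext[OF m(1,2)])
        fix i c assume "i \<in> {0..<N}" "c \<in> {0..<d}"
        then show "z i c = z' i c" using arg_cong[OF ww(3), of "\<lambda>w. fst w i c"]
          unfolding wz psi_def by simp
      qed
      moreover have "n = n'"
      proof (rule PiE3_ext[OF m(3,4)])
        fix i k c assume "i \<in> {0..<N}" "k \<in> {U-T..<U}" "c \<in> {0..<D}"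
        then show "n i k c = n' i k c" using arg_cong[OF ww(3), of "\<lambda>w. snd w i k c"]
          unfolding wz psi_def by simp
      qed
      ultimately show "w = w'" using wz by simp
    qed
    have z1m: "z1 \<in> {0..<N} \<rightarrow>\<^sub>E ({0..<d} \<rightarrow>\<^sub>E UNIV)" using w1(1) unfolding OmE by auto
    have Xpsi: "X (psi w) = x'" if "w \<in> Om" "X w = x" for w
    proof -
      obtain z n where wz: "w = (z, n)" by (cases w)
      have zz0: "restrict z ({0..<N} - Tset) = restrict z0 ({0..<N} - Tset)"
        using that(2) w0(2) unfolding wz X_def by simp
      have "X (psi w) = restrict (\<lambda>i\<in>{0..<N}. \<lambda>c\<in>{0..<d}. z i c + Dl i c) ({0..<N} - Tset)"
        unfolding wz X_def psi_def by simp
      also have "\<dots> = restrict z1 ({0..<N} - Tset)"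
      proof (rule restrict_ext)
        fix i assume i: "i \<in> {0..<N} - Tset"
        have "z i = z0 i" using fun_cong[OF zz0, of i] i by simp
        then have "(\<lambda>c\<in>{0..<d}. z i c + Dl i c) = restrict (z1 i) {0..<d}"
          using i unfolding Dl_def by (intro restrict_ext) auto
        also have "\<dots> = z1 i" using PiE_restrict[OF PiE_mem[OF z1m, of i]] i by simp
        finally show "(\<lambda>i\<in>{0..<N}. \<lambda>c\<in>{0..<d}. z i c + Dl i c) i = z1 i" using i by simp
      qed
      also have "\<dots> = x'" using w1(2) unfolding X_def by simp
      finally show ?thesis .
    qed
    have Ypsi: "Y (psi w) = Y w" if "w \<in> Om" for w
    proof -
      obtain z n where wz: "w = (z, n)" by (cases w)
      have zm: "z \<in> {0..<N} \<rightarrow>\<^sub>E ({0..<d} \<rightarrow>\<^sub>E UNIV)" using that unfolding wz OmE by auto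
      define z' where "z' = (\<lambda>i\<in>{0..<N}. \<lambda>c\<in>{0..<d}. z i c + Dl i c)"
      define n' where "n' = (\<lambda>i\<in>{0..<N}. \<lambda>k\<in>{U-T..<U}. \<lambda>c\<in>{0..<D}. n i k c + L i k c)"
      have pw: "psi w = (z', n')" unfolding wz psi_def z'_def n'_def by simp
      have p1: "restrict z' Tset = restrict z Tset"
      proof (rule restrict_ext)
        fix i assume i: "i \<in> Tset"
        then have iN: "i \<in> {0..<N}" using assms(7) by auto
        have "z' i = restrict (z i) {0..<d}" unfolding z'_def using i iN
          by (auto simp: Dl_def intro!: restrict_ext)
        also have "\<dots> = z i" using PiE_restrict[OF PiE_mem[OF zm iN]] .
        finally show "z' i = z i" .
      qed
      have p2: "enc T U d W z' n' j i = enc T U d W z n j i" if ji: "j \<in> {0..<N}" "i \<in> Tset" for j i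
        unfolding enc_def D_def[symmetric]
      proof (rule restrict_ext)
        fix c assume c: "c \<in> {0..<D}"
        define g where "g k = (if k < U-T then Dl j (k*D+c) else L j k c)" for k
        have bl: "block T U d z' n' j k c = block T U d z n j k c + g k" if k: "k < U" for k
        proof (cases "k < U-T")
          case True
          have "k*D+c < d" using blk_bound[OF True, of c D d] c dD by simp
          then show ?thesis using True ji unfolding block_def g_def z'_def D_def[symmetric] by simp
        next
          case False
          then show ?thesis using k ji c unfolding block_def g_def n'_def D_def[symmetric] by simp
        qed
        have "(\<Sum>k<U. W $$ (k, i) * block T U d z' n' j k c) =
            (\<Sum>k<U. W $$ (k, i) * block T U d z n j k c) + (\<Sum>k<U. W $$ (k, i) * g k)"
          by (simp add: bl distrib_left sum.distrib)
        also have "(\<Sum>k<U. W $$ (k, i) * g k) = 0"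
        proof -
          have "(\<Sum>k<U. W $$ (k, i) * g k) = (\<Sum>k\<in>{0..<U-T}. W $$ (k, i) * g k) + (\<Sum>k\<in>{U-T..<U}. W $$ (k, i) * g k)"
            by (simp add: lessThan_atLeast0 sum.atLeastLessThan_concat)
          also have "(\<Sum>k\<in>{0..<U-T}. W $$ (k, i) * g k) = (\<Sum>k<U-T. W $$ (k, i) * Dl j (k*D+c))"
            by (simp add: g_def lessThan_atLeast0)
          also have "(\<Sum>k\<in>{U-T..<U}. W $$ (k, i) * g k) = (\<Sum>k\<in>{U-T..<U}. W $$ (k, i) * L j k c)"
            by (intro sum.cong) (auto simp: g_def)
          also have "\<dots> = - (\<Sum>k<U-T. W $$ (k, i) * Dl j (k*D+c))"
            unfolding L_def using sol[OF ji(2)] by simp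
          finally show ?thesis by simp
        qed
        finally show "(\<Sum>k<U. W $$ (k, i) * block T U d z' n' j k c) = (\<Sum>k<U. W $$ (k, i) * block T U d z n j k c)"
          by simp
      qed
      show ?thesis unfolding pw unfolding wz Y_def using p1 p2
        by (auto intro!: restrict_ext)
    qed
    show ?thesis
    proof (rule card_inj_on_le)
      show "inj_on psi {w \<in> Om. X w = x \<and> Y w \<in> B}" using inj by (rule inj_on_subset) auto
      show "psi ` {w \<in> Om. X w = x \<and> Y w \<in> B} \<subseteq> {w \<in> Om. X w = x' \<and> Y w \<in> B}"
        using psiOm Xpsi Ypsi by auto
      show "finite {w \<in> Om. X w = x' \<and> Y w \<in> B}" using fin by simp
    qed
  qed
  have count: "card {w\<in>Om. X w \<in> A \<and> Y w \<in> B} * card Om = card {w\<in>Om. X w \<in> A} * card {w\<in>Om. Y w \<in> B}"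
    for A B by (rule indep_count[OF fin sym])
  define M where "M = measure_pmf (pmf_of_set Om)"
  have IS: "information_space M 2"
    unfolding M_def by (simp add: information_space_def information_space_axioms_def prob_space_measure_pmf)
  have PS: "prob_space M" unfolding M_def by (rule prob_space_measure_pmf)
  have meas: "measure M E = card {w\<in>Om. w \<in> E} / card Om" for E
    unfolding M_def using fin ne by (simp add: measure_pmf_of_set Int_def)
  have em: "emeasure M E = ennreal (card {w\<in>Om. w \<in> E} / card Om)" for E
    unfolding M_def using meas[of E] by (simp add: measure_pmf.emeasure_eq_measure M_def)
  have eq: "distr M (count_space UNIV) X \<Otimes>\<^sub>M distr M (count_space UNIV) Y =
      distr M (count_space UNIV \<Otimes>\<^sub>M count_space UNIV) (\<lambda>x. (X x, Y x))"
    proof (rule pair_measure_eqI)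
      show "sigma_finite_measure (distr M (count_space UNIV) X)"
        by (rule prob_space_imp_sigma_finite, rule prob_space.prob_space_distr[OF PS]) (simp add: M_def)
      show "sigma_finite_measure (distr M (count_space UNIV) Y)"
        by (rule prob_space_imp_sigma_finite, rule prob_space.prob_space_distr[OF PS]) (simp add: M_def)
      show "sets (distr M (count_space UNIV) X \<Otimes>\<^sub>M distr M (count_space UNIV) Y) =
        sets (distr M (count_space UNIV \<Otimes>\<^sub>M count_space UNIV) (\<lambda>x. (X x, Y x)))"
        using sets_pair_measure_cong[of "distr M (count_space UNIV) X" "count_space UNIV"
          "distr M (count_space UNIV) Y" "count_space UNIV"] by simp
    next
      fix A B
      assume "A \<in> sets (distr M (count_space UNIV) X)" "B \<in> sets (distr M (count_space UNIV) Y)"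
      have AB: "A \<times> B \<in> sets (count_space UNIV \<Otimes>\<^sub>M count_space UNIV)"
        by (rule pair_measureI) auto
      have "emeasure (distr M (count_space UNIV) X) A = emeasure M (X -` A)"
        by (subst emeasure_distr) (auto simp: M_def)
      moreover have "emeasure (distr M (count_space UNIV) Y) B = emeasure M (Y -` B)"
        by (subst emeasure_distr) (auto simp: M_def)
      moreover have "emeasure (distr M (count_space UNIV \<Otimes>\<^sub>M count_space UNIV) (\<lambda>x. (X x, Y x))) (A \<times> B)
          = emeasure M ((\<lambda>x. (X x, Y x)) -` (A \<times> B))"
        using AB by (subst emeasure_distr) (auto simp: M_def space_pair_measure)
      moreover have "card {w\<in>Om. w \<in> X -` A} / card Om * (card {w\<in>Om. w \<in> Y -` B} / card Om)
          = card {w\<in>Om. w \<in> (\<lambda>x. (X x, Y x)) -` (A \<times> B)} / card Om"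
      proof -
        define a where "a = real (card {w\<in>Om. X w \<in> A})"
        define b where "b = real (card {w\<in>Om. Y w \<in> B})"
        define e where "e = real (card {w\<in>Om. X w \<in> A \<and> Y w \<in> B})"
        define c where "c = real (card Om)"
        have s1: "{w\<in>Om. w \<in> X -` A} = {w\<in>Om. X w \<in> A}" by auto
        have s2: "{w\<in>Om. w \<in> Y -` B} = {w\<in>Om. Y w \<in> B}" by auto
        have s3: "{w\<in>Om. w \<in> (\<lambda>x. (X x, Y x)) -` (A \<times> B)} = {w\<in>Om. X w \<in> A \<and> Y w \<in> B}" by auto
        have ec: "e * c = a * b" unfolding a_def b_def c_def e_def
          using arg_cong[OF count[of A B], of real] by (simp only: of_nat_mult)
        have "card Om > 0" using fin ne by (simp add: card_gt_0_iff)
        then have cp: "c > 0" unfolding c_def by simp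
        have "a / c * (b / c) = (a * b) / (c * c)" by simp
        also have "\<dots> = (e * c) / (c * c)" using ec by simp
        also have "\<dots> = e / c" using cp by simp
        finally show ?thesis unfolding s1 s2 s3 a_def b_def c_def e_def .
      qed
      ultimately show "emeasure (distr M (count_space UNIV) X) A * emeasure (distr M (count_space UNIV) Y) B =
        emeasure (distr M (count_space UNIV \<Otimes>\<^sub>M count_space UNIV) (\<lambda>x. (X x, Y x))) (A \<times> B)"
        unfolding em by (simp add: ennreal_mult[symmetric])
    qed
  have "prob_space.mutual_information M 2 (count_space UNIV) (count_space UNIV) X Y = 0"
    unfolding prob_space.mutual_information_def[OF PS] eq
  proof (rule sigma_finite_measure.KL_same_eq_0)
    show "sigma_finite_measure (distr M (count_space UNIV \<Otimes>\<^sub>M count_space UNIV) (\<lambda>x. (X x, Y x)))"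
      by (rule prob_space_imp_sigma_finite, rule prob_space.prob_space_distr[OF PS]) (simp add: M_def space_pair_measure)
  qed
  then show ?thesis unfolding M_def Om_def X_def Y_def .
qed

end
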